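(* Let $\mu$ be a probability measure on $[0,\infty)$ with mean $1$ such that $\Lambda_\mu$ is finite on a neighborhood of $0$. Let $r_0\in[0,\infty)$ be the unique real number with $G_\mu=1$ on $[0,r_0]$ and $G_\mu<1$ on $(r_0,\infty)$, and suppose $G_\mu$ is continuous and strictly decreasing on $[r_0,\infty)$; write $G_\mu^{-1}$ for the inverse of $G_\mu|_{[r_0,\infty)}$ (defined on $(0,1]$). Then $H_\mu|_{(0,1]}=G_\mu^{-1}$, where $H_\mu(\rho)=\sup\{r\in[0,\infty):G_\mu(r)\ge\rho\}$. Let $P$ be a probability measure and $\nu$ a $\sigma$-finite positive measure with $dP=p\,d\nu$, let $\psi(y)=P(p\le y)$ for $y\ge0$, and suppose $(0,1)\subset\mathrm{range}(\psi)$. Define $\phi(y)=G_\mu^{-1}(\psi(y))1_{\psi(y)>0}$. Then $Q(dx)=\phi(p(x))P(dx)$ is a probability measure, $dQ/dP$ has distribution $\mu$ under $P$, and $Q\in\mathcal{U}^\mu(P)$.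
   Context: For a probability measure $\mu$ on $[0,\infty)$ with mean $1$, $G_\mu(r)=\mu([r,\infty))$ for $r\ge0$ and $\Lambda_\mu(\lambda)=\log\big((\lambda+1)\int_0^\infty G_\mu(z)z^\lambda\,dz\big)$ for $\lambda\ge0$. With $\Lambda_Q^f(\lambda)=\log E_Q[e^{\lambda f}]$, and $\Lambda_\mu$ finite near $0$, $\mathcal{U}^\mu(P)=\{Q \text{ probability measure}: Q\ll P,\ \Lambda_Q^{\log(dQ/dP)}(\lambda)\le\Lambda_\mu(\lambda)\ \text{for all }\lambda>0\}$. *)

theory Defs
  imports "HOL-Probability.Probability"
begin

definition eln :: "ennreal \<Rightarrow> ereal" where
  "eln x = (if x = 0 then -\<infinity> else if x = \<infinity> then \<infinity> else ereal (ln (enn2real x)))"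

definition eexp :: "ereal \<Rightarrow> ennreal" where
  "eexp x = (case x of ereal r \<Rightarrow> ennreal (exp r) | PInfty \<Rightarrow> \<infinity> | MInfty \<Rightarrow> 0)"

definition G_mu :: "real measure \<Rightarrow> real \<Rightarrow> real" where
  "G_mu \<mu> r = measure \<mu> {r..}"

definition Lambda_mu :: "real measure \<Rightarrow> real \<Rightarrow> ereal" where
  "Lambda_mu \<mu> l = eln (ennreal (l + 1) *
       (\<integral>\<^sup>+ z. indicator {0..} z * ennreal (G_mu \<mu> z * z powr l) \<partial>lborel))"

definition H_mu :: "real measure \<Rightarrow> real \<Rightarrow> real" where
  "H_mu \<mu> \<rho> = Sup {r. 0 \<le> r \<and> \<rho> \<le> G_mu \<mu> r}"

definition Lambda_Q :: "'a measure \<Rightarrow> ('a \<Rightarrow> ereal) \<Rightarrow> real \<Rightarrow> ereal" where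
  "Lambda_Q Q f l = eln (\<integral>\<^sup>+ x. eexp (ereal l * f x) \<partial>Q)"

definition U_mu :: "real measure \<Rightarrow> 'a measure \<Rightarrow> 'a measure set" where
  "U_mu \<mu> P = {Q. prob_space Q \<and> sets Q = sets P \<and> absolutely_continuous P Q \<and>
      (\<forall>l>0. Lambda_Q Q (\<lambda>x. eln (RN_deriv P Q x)) l \<le> Lambda_mu \<mu> l)}"

end

theory Submission imports Defs begin

lemma G_antimono:
  assumes "prob_space \<mu>" "sets \<mu> = sets borel" "x \<le> y"
  shows "G_mu \<mu> y \<le> G_mu \<mu> x"
proof -
  interpret prob_space \<mu> by fact
  show ?thesis unfolding G_mu_def
    using assms by (intro finite_measure_mono) auto
qed

lemma G_markov:
  assumes "prob_space \<mu>" "sets \<mu> = sets borel" "(\<integral>\<^sup>+ x. ennreal x \<partial>\<mu>) = 1" "r > 0"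
  shows "r * G_mu \<mu> r \<le> 1"
proof -
  interpret prob_space \<mu> by fact
  have "ennreal r * emeasure \<mu> {r..} = (\<integral>\<^sup>+ x. ennreal r * indicator {r..} x \<partial>\<mu>)"
    using assms by (subst nn_integral_cmult_indicator) auto
  also have "\<dots> \<le> (\<integral>\<^sup>+ x. ennreal x \<partial>\<mu>)"
    by (intro nn_integral_mono) (auto split: split_indicator intro: ennreal_leI)
  finally have "ennreal (r * G_mu \<mu> r) \<le> 1"
    using assms unfolding G_mu_def by (simp add: emeasure_eq_measure ennreal_mult)
  then show ?thesis by (simp add: ennreal_le_1)
qed


locale Gs =
  fixes \<mu> :: "real measure" and r0 :: real
  assumes mu_prob: "prob_space \<mu>" and mu_sets: "sets \<mu> = sets borel"
    and mu_supp: "measure \<mu> {0..} = 1"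
    and mu_mean: "(\<integral>\<^sup>+ x. ennreal x \<partial>\<mu>) = 1"
    and r0_nonneg: "0 \<le> r0"
    and r0_one: "\<forall>r\<in>{0..r0}. G_mu \<mu> r = 1"
    and G_cont: "continuous_on {r0..} (G_mu \<mu>)"
    and G_strict: "strict_antimono_on {r0..} (G_mu \<mu>)"
begin

abbreviation "G \<equiv> G_mu \<mu>"
abbreviation "Gi \<equiv> the_inv_into {r0..} G"

lemma G_mono: "x \<le> y \<Longrightarrow> G y \<le> G x"
  using G_antimono[OF mu_prob mu_sets] .

lemma G_le1: "G x \<le> 1"
proof -
  interpret prob_space \<mu> by (rule mu_prob)
  show ?thesis unfolding G_mu_def by simp
qed

lemma G_nonneg: "0 \<le> G x"
  unfolding G_mu_def by simp

lemma G_neg: "x \<le> 0 \<Longrightarrow> G x = 1"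
  using G_mono[of x 0] G_le1[of x] mu_supp unfolding G_mu_def by simp

lemma G_strictD: "r0 \<le> x \<Longrightarrow> x < y \<Longrightarrow> G y < G x"
  using G_strict unfolding monotone_on_def by auto

lemma G_pos: "r0 \<le> x \<Longrightarrow> 0 < G x"
  using G_strictD[of x "x+1"] G_nonneg[of "x+1"] by simp

lemma G_r0: "G r0 = 1"
  using r0_one r0_nonneg by auto

lemma G_lt1: "r0 < x \<Longrightarrow> G x < 1"
  using G_strictD[of r0 x] G_r0 by simp

lemma G_inj: "inj_on G {r0..}"
  unfolding inj_on_def
  by (metis G_strictD atLeast_iff linorder_neqE_linordered_idom order_less_irrefl)

lemma G_surj:
  assumes "0 < t" "t \<le> 1"
  shows "\<exists>c\<ge>r0. G c = t"
proof -
  define b where "b = max r0 (2 / t)"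
  have bpos: "b > 0" using assms unfolding b_def
    by (smt (verit) divide_pos_pos)
  have "b * G b \<le> 1" using G_markov[OF mu_prob mu_sets mu_mean bpos] .
  moreover have "b \<ge> 2 / t" unfolding b_def by simp
  ultimately have "(2/t) * G b \<le> 1"
    by (smt (verit) G_nonneg mult_right_mono)
  hence "G b \<le> t / 2" using assms by (simp add: field_simps)
  hence Gb: "G b \<le> t" using assms by simp
  have "r0 \<le> b" unfolding b_def by simp
  moreover have "continuous_on {r0..b} G"
    using G_cont by (rule continuous_on_subset) auto
  ultimately obtain c where "c \<ge> r0" "c \<le> b" "G c = t"
    using IVT2'[of G b t r0] Gb assms G_r0 by auto
  then show ?thesis by auto
qed

lemma Gi_props:
  assumes "0 < t" "t \<le> 1"
  shows "r0 \<le> Gi t" "G (Gi t) = t"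
proof -
  obtain c where c: "c \<ge> r0" "G c = t" using G_surj[OF assms] by auto
  have "Gi t = c" using c G_inj by (auto intro!: the_inv_into_f_eq)
  then show "r0 \<le> Gi t" "G (Gi t) = t" using c by auto
qed

lemma Gi_key:
  assumes "0 < t" "t \<le> 1" "r0 \<le> r"
  shows "r \<le> Gi t \<longleftrightarrow> t \<le> G r"
proof
  assume "r \<le> Gi t" then show "t \<le> G r"
    using G_mono Gi_props[OF assms(1,2)] by metis
next
  assume h: "t \<le> G r"
  show "r \<le> Gi t"
  proof (rule ccontr)
    assume "\<not> r \<le> Gi t"
    then have "Gi t < r" by simp
    then have "G r < G (Gi t)" using G_strictD[of "Gi t" r] Gi_props(1)[OF assms(1,2)] by blast
    then show False using h Gi_props[OF assms(1,2)] by simp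
  qed
qed

lemma H_eq:
  assumes "0 < t" "t \<le> 1"
  shows "H_mu \<mu> t = Gi t"
proof -
  have iff: "(0 \<le> r \<and> t \<le> G r) \<longleftrightarrow> (0 \<le> r \<and> r \<le> Gi t)" for r
  proof (cases "r0 \<le> r")
    case True then show ?thesis using Gi_key[OF assms True] by blast
  next
    case False
    have "0 \<le> r \<Longrightarrow> G r = 1" using r0_one False by auto
    then show ?thesis using Gi_props(1)[OF assms] False assms(2) by force
  qed
  have "{r. 0 \<le> r \<and> t \<le> G r} = {0..Gi t}"
    by (rule set_eqI) (simp only: mem_Collect_eq atLeastAtMost_iff iff)
  moreover have "0 \<le> Gi t" using Gi_props[OF assms] r0_nonneg by simp
  ultimately show ?thesis unfolding H_mu_def by simp
qed

end

locale Ps =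
  fixes P :: "'a measure" and p :: "'a \<Rightarrow> real"
  assumes P_prob: "prob_space P" and p_meas: "p \<in> borel_measurable P"
    and p_nonneg: "\<forall>x\<in>space P. 0 \<le> p x"
    and psi_range: "{0<..<1} \<subseteq> (\<lambda>y. measure P {x\<in>space P. p x \<le> y}) ` {0..}"
begin

definition "psi y = measure P {x\<in>space P. p x \<le> y}"

lemma psi_mono: "a \<le> b \<Longrightarrow> psi a \<le> psi b"
proof -
  interpret prob_space P by (rule P_prob)
  assume "a \<le> b"
  then show ?thesis unfolding psi_def using p_meas
    by (intro finite_measure_mono) auto
qed

lemma psi_le1: "psi a \<le> 1"
proof -
  interpret prob_space P by (rule P_prob)
  show ?thesis unfolding psi_def by simp
qed

lemma psi_nonneg: "0 \<le> psi a"
  unfolding psi_def by simp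

lemma psi_attained: "0 < t \<Longrightarrow> t < 1 \<Longrightarrow> \<exists>y\<ge>0. psi y = t"
  using psi_range unfolding psi_def by force

lemma psi_meas[measurable]: "psi \<in> borel_measurable borel"
  by (rule borel_measurable_mono) (auto simp: mono_def psi_mono)

lemma psip_meas[measurable]: "(\<lambda>x. psi (p x)) \<in> borel_measurable P"
  using p_meas by measurable

lemma psi_level:
  assumes "0 < s" "s < 1"
  shows "\<exists>b. psi b = s \<and> {x\<in>space P. psi (p x) \<le> s} = {x\<in>space P. p x \<le> b}"
proof -
  define B where "B = {y. 0 \<le> y \<and> psi y \<le> s}"
  define b where "b = Sup B"
  obtain y0 where y0: "y0 \<ge> 0" "psi y0 = s" using psi_attained assms by blast
  have y0B: "y0 \<in> B" using y0 unfolding B_def by auto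
  obtain y1 where y1: "y1 \<ge> 0" "psi y1 = (s + 1) / 2" using psi_attained[of "(s+1)/2"] assms by auto
  have bdd: "bdd_above B"
  proof (rule bdd_aboveI)
    fix y assume "y \<in> B"
    then have "psi y \<le> s" unfolding B_def by auto
    then show "y \<le> y1" using psi_mono[of y1 y] y1 assms by (cases "y \<le> y1") auto
  qed
  have upper: "y \<in> B \<Longrightarrow> y \<le> b" for y unfolding b_def using bdd by (simp add: cSup_upper)
  have "psi b \<ge> s" using psi_mono[OF upper[OF y0B]] y0 by simp
  moreover have "psi b \<le> s"
  proof (rule ccontr)
    assume "\<not> psi b \<le> s"
    define t where "t = (s + psi b) / 2"
    have t: "s < t" "t < psi b" "t < 1" using \<open>\<not> psi b \<le> s\<close> psi_le1[of b] unfolding t_def by auto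
    obtain y where y: "y \<ge> 0" "psi y = t" using psi_attained[of t] t assms by auto
    show False
    proof (cases "y < b")
      case True
      then obtain y' where "y' \<in> B" "y < y'" unfolding b_def
        using less_cSup_iff[OF _ bdd] y0B by blast
      then have "psi y \<le> s" using psi_mono[of y y'] unfolding B_def by auto
      then show False using y t by simp
    next
      case False
      then show False using psi_mono[of b y] y t by simp
    qed
  qed
  ultimately have pb: "psi b = s" by simp
  have "{x\<in>space P. psi (p x) \<le> s} = {x\<in>space P. p x \<le> b}"
  proof safe
    fix x assume "x \<in> space P" "psi (p x) \<le> s"
    then have "p x \<in> B" unfolding B_def using p_nonneg by auto
    then show "p x \<le> b" by (rule upper)
  next
    fix x assume "x \<in> space P" "p x \<le> b"
    then show "psi (p x) \<le> s" using psi_mono[of "p x" b] pb by simp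
  qed
  then show ?thesis using pb by blast
qed

lemma psi_unif:
  assumes "0 < s" "s < 1"
  shows "measure P {x\<in>space P. psi (p x) \<le> s} = s"
  using psi_level[OF assms] unfolding psi_def by metis

lemma psi_zero: "measure P {x\<in>space P. psi (p x) \<le> 0} = 0"
proof (rule ccontr)
  interpret prob_space P by (rule P_prob)
  let ?m = "measure P {x\<in>space P. psi (p x) \<le> 0}"
  assume "?m \<noteq> 0"
  then have m: "?m > 0" by (simp add: order_neq_le_trans)
  define s where "s = min (?m / 2) (1/2)"
  have m1: "?m \<le> 1" by simp
  have s: "0 < s" "s < 1" using m m1 unfolding s_def by linarith+
  have "?m \<le> measure P {x\<in>space P. psi (p x) \<le> s}"
    using s by (intro finite_measure_mono) auto
  also have "\<dots> = s" by (rule psi_unif[OF s])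
  finally show False using m unfolding s_def by linarith
qed

end

lemma borel_atLeast_real: "sets (borel::real measure) = sigma_sets UNIV (range atLeast)"
proof -
  have u: "UNIV \<times> (Basis::real set) = (\<lambda>a. (a,1)) ` UNIV" by auto
  have "((\<lambda> (a, i). {x::real. a \<le> x \<bullet> i}) ` (UNIV \<times> Basis)) = range atLeast"
    unfolding u image_image by (simp add: atLeast_def)
  then show ?thesis
    by (subst borel_eq_halfspace_ge) (simp add: sets_measure_of)
qed

locale Ms = Gs \<mu> r0 + Ps P p for \<mu> r0 P p
begin

definition "X x = (if psi (p x) > 0 then Gi (psi (p x)) else 0)"

lemma psi_in: "0 < psi (p x) \<Longrightarrow> 0 < psi (p x) \<and> psi (p x) \<le> 1"
  using psi_le1 by auto

lemma X_nonneg: "0 \<le> X x"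
  unfolding X_def using Gi_props(1)[of "psi (p x)"] psi_le1 r0_nonneg by force

lemma X_ge_set: "{x\<in>space P. r \<le> X x} =
  (if r \<le> 0 then space P else if r \<le> r0 then {x\<in>space P. 0 < psi (p x)}
   else {x\<in>space P. 0 < psi (p x) \<and> psi (p x) \<le> G r})"
proof -
  have "r \<le> X x \<longleftrightarrow> (if r \<le> 0 then True else if r \<le> r0 then 0 < psi (p x)
     else 0 < psi (p x) \<and> psi (p x) \<le> G r)" for x
  proof (cases "0 < psi (p x)")
    case True
    note t = psi_in[OF True]
    have X: "X x = Gi (psi (p x))" using True unfolding X_def by simp
    show ?thesis
    proof (cases "r \<le> r0")
      case True then show ?thesis using X Gi_props(1)[OF t[THEN conjunct1] t[THEN conjunct2]] t by auto
    next
      case False then show ?thesis using X Gi_key[of "psi (p x)" r] t r0_nonneg by auto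
    qed
  next
    case False
    then show ?thesis unfolding X_def by auto
  qed
  then show ?thesis by auto
qed

lemma X_meas[measurable]: "X \<in> borel_measurable P"
  unfolding borel_measurable_iff_ge X_ge_set by auto

lemma X_ge_measure: "emeasure P {x\<in>space P. r \<le> X x} = ennreal (G r)"
proof -
  interpret prob_space P by (rule P_prob)
  have z: "emeasure P {x\<in>space P. psi (p x) \<le> 0} = 0"
    using psi_zero by (simp add: emeasure_eq_measure)
  show ?thesis
  proof (cases "r \<le> r0")
    case True
    have "emeasure P {x\<in>space P. 0 < psi (p x)} = 1"
    proof -
      have "{x\<in>space P. 0 < psi (p x)} = space P - {x\<in>space P. psi (p x) \<le> 0}" by auto
      then show ?thesis using z by (simp add: emeasure_compl emeasure_space_1)
    qed
    moreover have "G r = 1" using True r0_one G_neg[of r] by (cases "r \<le> 0") auto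
    ultimately show ?thesis using True by (simp add: X_ge_set emeasure_space_1)
  next
    case False
    have g: "0 < G r" "G r < 1" using G_pos[of r] G_lt1[of r] False by auto
    have h: "{x\<in>space P. 0 < psi (p x) \<and> psi (p x) \<le> G r} =
       {x\<in>space P. psi (p x) \<le> G r} - {x\<in>space P. psi (p x) \<le> 0}" by auto
    have "measure P {x\<in>space P. 0 < psi (p x) \<and> psi (p x) \<le> G r} = G r - 0"
      unfolding h using psi_unif[OF g] psi_zero g by (subst finite_measure_Diff) auto
    then show ?thesis using False r0_nonneg by (simp add: X_ge_set emeasure_eq_measure)
  qed
qed

lemma distr_X: "distr P borel X = \<mu>"
proof (rule measure_eqI_generator_eq[where \<Omega>=UNIV and E="range atLeast" and A="\<lambda>i. {- real i..}"])
  show "Int_stable (range (atLeast :: real \<Rightarrow> _))"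
    unfolding Int_stable_def
  proof safe
    fix a b :: real show "{a..} \<inter> {b..} \<in> range atLeast"
      by (rule range_eqI[of _ _ "max a b"]) auto
  qed
  show "sets (distr P borel X) = sigma_sets UNIV (range atLeast)" by (simp add: borel_atLeast_real)
  show "sets \<mu> = sigma_sets UNIV (range atLeast)" by (simp add: mu_sets borel_atLeast_real)
next
  fix E assume "E \<in> range (atLeast :: real \<Rightarrow> _)"
  then obtain r where E: "E = {r..}" by auto
  interpret mu: prob_space \<mu> by (rule mu_prob)
  have "emeasure (distr P borel X) E = emeasure P {x\<in>space P. r \<le> X x}"
    unfolding E by (subst emeasure_distr) (auto intro!: arg_cong[where f="emeasure P"])
  also have "\<dots> = emeasure \<mu> E"
    unfolding X_ge_measure E G_mu_def by (simp add: mu.emeasure_eq_measure)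
  finally show "emeasure (distr P borel X) E = emeasure \<mu> E" .
next
  interpret prob_space P by (rule P_prob)
  fix i show "emeasure (distr P borel X) {- real i..} \<noteq> \<infinity>"
    by (subst emeasure_distr) auto
next
  show "(\<Union>i. {- real i..}) = (UNIV::real set)"
  proof safe
    fix x :: real
    obtain n :: nat where "-x \<le> real n" using real_arch_simple by blast
    then show "x \<in> (\<Union>i. {- real i..})" by (auto intro!: exI[of _ n])
  qed simp
qed auto

end

lemma inner_FTC:
  fixes l x :: real
  assumes "0 < l" "0 \<le> x"
  shows "(\<integral>\<^sup>+ z. ennreal ((l+1) * z powr l) * indicator {0..x} z \<partial>lborel) = ennreal (x powr (l+1))"
proof -
  have "((\<lambda>z. (l+1) * z powr l) has_integral (x powr (l+1) - 0 powr (l+1))) {0..x}"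
  proof (rule fundamental_theorem_of_calculus_interior)
    show "continuous_on {0..x} (\<lambda>z. z powr (l + 1))"
      using assms by (intro continuous_on_powr') (auto intro: continuous_intros)
    fix z assume "z \<in> {0<..<x}"
    then have "((\<lambda>z. z powr (l+1)) has_real_derivative (l+1) * z powr (l+1-1)) (at z)"
      by (intro has_real_derivative_powr) auto
    then show "((\<lambda>z. z powr (l + 1)) has_vector_derivative (l + 1) * z powr l) (at z)"
      by (simp add: has_real_derivative_iff_has_vector_derivative)
  qed (use assms in auto)
  then have "((\<lambda>z. (l+1) * z powr l) has_integral (x powr (l+1))) {0..x}" by simp
  then show ?thesis
    by (intro nn_integral_has_integral_lebesgue') (use assms in auto)
qed

lemma layer_cake:
  fixes \<mu> :: "real measure" and l :: real
  assumes mu: "prob_space \<mu>" and sets: "sets \<mu> = sets borel" and supp: "measure \<mu> {0..} = 1" and l: "0 < l"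
  shows "(\<integral>\<^sup>+x. ennreal (x powr (l+1)) \<partial>\<mu>) =
    ennreal (l + 1) * (\<integral>\<^sup>+ z. indicator {0..} z * ennreal (G_mu \<mu> z * z powr l) \<partial>lborel)"
proof -
  interpret mu: prob_space \<mu> by (rule mu)
  interpret pair_sigma_finite lborel \<mu> by unfold_locales
  define k where "k z x = ennreal (z powr l) * (if 0 \<le> z \<and> z \<le> x then 1 else 0)" for z x :: real
  have kb: "(\<lambda>(z, x). k z x) \<in> borel_measurable (borel \<Otimes>\<^sub>M borel)"
    unfolding k_def by measurable
  have kb': "(\<lambda>(z, x). k z x) \<in> borel_measurable (lborel \<Otimes>\<^sub>M borel)"
    using kb by (subst measurable_cong_sets[OF sets_pair_measure_cong[OF sets_lborel refl] refl])
  have km: "(\<lambda>(z, x). k z x) \<in> borel_measurable (lborel \<Otimes>\<^sub>M \<mu>)"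
    using kb' by (subst measurable_cong_sets[OF sets_pair_measure_cong[OF refl sets] refl])
  have kmb: "(\<lambda>(z, x). k z x) \<in> borel_measurable (borel \<Otimes>\<^sub>M \<mu>)"
    using kb by (subst measurable_cong_sets[OF sets_pair_measure_cong[OF refl sets] refl])
  have km2: "(\<lambda>(z, x). ennreal (l+1) * k z x) \<in> borel_measurable (lborel \<Otimes>\<^sub>M \<mu>)"
    using km by measurable
  have kx: "k z \<in> borel_measurable \<mu>" for z
    unfolding k_def by (simp add: measurable_cong_sets[OF sets refl])
  have pt: "(\<integral>\<^sup>+ x. k z x \<partial>\<mu>) = indicator {0..} z * ennreal (G_mu \<mu> z * z powr l)" for z
  proof -
    have "(\<integral>\<^sup>+ x. k z x \<partial>\<mu>) = (\<integral>\<^sup>+ x. (ennreal (z powr l) * indicator {0..} z) * indicator {z..} x \<partial>\<mu>)"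
      unfolding k_def by (intro nn_integral_cong) (auto split: split_indicator)
    also have "\<dots> = (ennreal (z powr l) * indicator {0..} z) * emeasure \<mu> {z..}"
      using sets by (intro nn_integral_cmult_indicator) auto
    also have "\<dots> = indicator {0..} z * ennreal (G_mu \<mu> z * z powr l)"
      unfolding G_mu_def mu.emeasure_eq_measure
      by (simp add: ennreal_mult mult_ac)
    finally show ?thesis .
  qed
  have AE0: "AE x in \<mu>. 0 \<le> x"
  proof -
    have "AE x in \<mu>. x \<in> {0..}" using supp sets by (intro mu.AE_prob_1) auto
    then show ?thesis by auto
  qed
  have "ennreal (l + 1) * (\<integral>\<^sup>+ z. indicator {0..} z * ennreal (G_mu \<mu> z * z powr l) \<partial>lborel)
      = ennreal (l + 1) * (\<integral>\<^sup>+ z. (\<integral>\<^sup>+ x. k z x \<partial>\<mu>) \<partial>lborel)"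
    by (simp add: pt)
  also have "\<dots> = (\<integral>\<^sup>+ z. ennreal (l + 1) * (\<integral>\<^sup>+ x. k z x \<partial>\<mu>) \<partial>lborel)"
    using kmb by (intro nn_integral_cmult[symmetric]) (simp add: split_beta')
  also have "\<dots> = (\<integral>\<^sup>+ z. (\<integral>\<^sup>+ x. ennreal (l + 1) * k z x \<partial>\<mu>) \<partial>lborel)"
    using kx by (intro nn_integral_cong nn_integral_cmult[symmetric]) auto
  also have "\<dots> = (\<integral>\<^sup>+ x. (\<integral>\<^sup>+ z. ennreal (l + 1) * k z x \<partial>lborel) \<partial>\<mu>)"
    using Fubini'[of "\<lambda>z x. ennreal (l + 1) * k z x"] km2 by simp
  also have "\<dots> = (\<integral>\<^sup>+x. ennreal (x powr (l+1)) \<partial>\<mu>)"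
  proof (intro nn_integral_cong_AE, use AE0 in eventually_elim)
    case (elim x)
    have "(\<integral>\<^sup>+ z. ennreal (l + 1) * k z x \<partial>lborel) =
          (\<integral>\<^sup>+ z. ennreal ((l+1) * z powr l) * indicator {0..x} z \<partial>lborel)"
      unfolding k_def using l by (intro nn_integral_cong) (auto simp: ennreal_mult split: split_indicator)
    also have "\<dots> = ennreal (x powr (l+1))" using inner_FTC l elim by simp
    finally show ?case .
  qed
  finally show ?thesis ..
qed


lemma eexp_eln_powr:
  assumes "0 \<le> y" "0 < l"
  shows "eexp (ereal l * eln (ennreal y)) = ennreal (y powr l)"
proof (cases "y = 0")
  case True then show ?thesis using assms by (simp add: eln_def eexp_def)
next
  case False
  then have "y > 0" using assms by simp
  then show ?thesis by (simp add: eln_def eexp_def powr_def)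
qed

lemma mul_powr_Suc:
  assumes "0 \<le> (y::real)"
  shows "y * y powr l = y powr (l + 1)"
  using assms by (cases "y = 0") (auto simp: powr_add)

context Ms
begin

lemma Q_facts:
  defines "Q \<equiv> density P (\<lambda>x. ennreal (X x))"
  shows "prob_space Q \<and> distr P borel (\<lambda>x. enn2real (RN_deriv P Q x)) = \<mu> \<and> Q \<in> U_mu \<mu> P"
proof -
  interpret prob_space P by (rule P_prob)
  have int1: "(\<integral>\<^sup>+x. ennreal (X x) \<partial>P) = 1"
  proof -
    have "(\<integral>\<^sup>+x. ennreal (X x) \<partial>P) = (\<integral>\<^sup>+y. ennreal y \<partial>distr P borel X)"
      by (subst nn_integral_distr) auto
    also have "\<dots> = 1" using distr_X mu_mean by simp
    finally show ?thesis .
  qed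
  have Qsp: "emeasure Q (space Q) = 1"
    unfolding Q_def using int1
    by (subst emeasure_density) (auto intro!: nn_integral_cong split: split_indicator)
  have Qprob: "prob_space Q" by (rule prob_spaceI[OF Qsp])
  have AEP: "AE x in P. ennreal (X x) = RN_deriv P Q x"
    unfolding Q_def by (rule RN_deriv_unique) auto
  have dist: "distr P borel (\<lambda>x. enn2real (RN_deriv P Q x)) = \<mu>"
  proof -
    have "distr P borel (\<lambda>x. enn2real (RN_deriv P Q x)) = distr P borel X"
    proof (rule distr_cong_AE)
      show "AE x in P. enn2real (RN_deriv P Q x) = X x"
        using AEP by eventually_elim (auto simp: X_nonneg dest: sym)
    qed auto
    then show ?thesis using distr_X by simp
  qed
  have setsQ: "sets Q = sets P" unfolding Q_def by simp
  have ac: "absolutely_continuous P Q" unfolding Q_def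
    by (rule absolutely_continuousI_density) auto
  have AEQ: "AE x in Q. RN_deriv P Q x = ennreal (X x)"
    using absolutely_continuous_AE[OF setsQ ac AEP] by eventually_elim simp
  have Lam: "Lambda_Q Q (\<lambda>x. eln (RN_deriv P Q x)) l \<le> Lambda_mu \<mu> l" if l: "l > 0" for l
  proof -
    have "(\<integral>\<^sup>+ x. eexp (ereal l * eln (RN_deriv P Q x)) \<partial>Q) = (\<integral>\<^sup>+ x. ennreal (X x powr l) \<partial>Q)"
      using AEQ by (intro nn_integral_cong_AE) (auto simp: eexp_eln_powr X_nonneg l)
    also have "\<dots> = (\<integral>\<^sup>+ x. ennreal (X x) * ennreal (X x powr l) \<partial>P)"
      unfolding Q_def by (subst nn_integral_density) auto
    also have "\<dots> = (\<integral>\<^sup>+ x. ennreal (X x powr (l+1)) \<partial>P)"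
      by (intro nn_integral_cong) (simp add: ennreal_mult[symmetric] mul_powr_Suc X_nonneg)
    also have "\<dots> = (\<integral>\<^sup>+ y. ennreal (y powr (l+1)) \<partial>distr P borel X)"
      by (subst nn_integral_distr) auto
    also have "\<dots> = (\<integral>\<^sup>+ y. ennreal (y powr (l+1)) \<partial>\<mu>)" using distr_X by simp
    also have "\<dots> = ennreal (l + 1) * (\<integral>\<^sup>+ z. indicator {0..} z * ennreal (G_mu \<mu> z * z powr l) \<partial>lborel)"
      by (rule layer_cake[OF mu_prob mu_sets mu_supp l])
    finally show ?thesis unfolding Lambda_Q_def Lambda_mu_def by simp
  qed
  have "Q \<in> U_mu \<mu> P" unfolding U_mu_def using Qprob setsQ ac Lam by auto
  then show ?thesis using Qprob dist by auto
qed

end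
theorem mainTheorem6:
  fixes \<mu> :: "real measure" and r0 :: real
    and P \<nu> :: "'a measure" and p :: "'a \<Rightarrow> real"
  assumes mu_prob: "prob_space \<mu>" and mu_sets: "sets \<mu> = sets borel"
    and mu_supp: "measure \<mu> {0..} = 1"
    and mu_mean: "(\<integral>\<^sup>+ x. ennreal x \<partial>\<mu>) = 1"
    and mu_Lambda_fin: "\<exists>\<epsilon>>0. \<forall>l\<in>{0..<\<epsilon>}. Lambda_mu \<mu> l \<noteq> \<infinity> \<and> Lambda_mu \<mu> l \<noteq> -\<infinity>"
    and r0_nonneg: "0 \<le> r0"
    and r0_one: "\<forall>r\<in>{0..r0}. G_mu \<mu> r = 1"
    and r0_less: "\<forall>r\<in>{r0<..}. G_mu \<mu> r < 1"
    and G_cont: "continuous_on {r0..} (G_mu \<mu>)"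
    and G_strict: "strict_antimono_on {r0..} (G_mu \<mu>)"
    and nu_sf: "sigma_finite_measure \<nu>"
    and p_meas: "p \<in> borel_measurable \<nu>"
    and p_nonneg: "\<forall>x\<in>space \<nu>. 0 \<le> p x"
    and P_def: "P = density \<nu> (\<lambda>x. ennreal (p x))"
    and P_prob: "prob_space P"
    and psi_range: "{0<..<1} \<subseteq> (\<lambda>y. measure P {x\<in>space P. p x \<le> y}) ` {0..}"
  shows "(\<forall>\<rho>\<in>{0<..1}. H_mu \<mu> \<rho> = the_inv_into {r0..} (G_mu \<mu>) \<rho>) \<and>
    (let \<psi> = (\<lambda>y. measure P {x\<in>space P. p x \<le> y});
         \<phi> = (\<lambda>y. if \<psi> y > 0 then the_inv_into {r0..} (G_mu \<mu>) (\<psi> y) else 0);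
         Q = density P (\<lambda>x. ennreal (\<phi> (p x)))
     in prob_space Q \<and>
        distr P borel (\<lambda>x. enn2real (RN_deriv P Q x)) = \<mu> \<and>
        Q \<in> U_mu \<mu> P)"
proof -
  have sPnu: "sets P = sets \<nu>" unfolding P_def by (rule sets_density)
  have spPnu: "space P = space \<nu>" unfolding P_def by (rule space_density)
  have pP: "p \<in> borel_measurable P"
    unfolding measurable_cong_sets[OF sPnu refl] by (rule p_meas)
  have pn: "\<forall>x\<in>space P. 0 \<le> p x" using p_nonneg unfolding spPnu .
  interpret Ms \<mu> r0 P p
    unfolding Ms_def Gs_def Ps_def by (intro conjI) (fact mu_prob mu_sets mu_supp mu_mean r0_nonneg r0_one G_cont G_strict
        P_prob pP pn psi_range)+
  have H: "\<forall>\<rho>\<in>{0<..1}. H_mu \<mu> \<rho> = the_inv_into {r0..} (G_mu \<mu>) \<rho>"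
    using H_eq by auto
  have eq: "(\<lambda>x. ennreal (if measure P {y\<in>space P. p y \<le> p x} > 0
      then the_inv_into {r0..} (G_mu \<mu>) (measure P {y\<in>space P. p y \<le> p x}) else 0))
      = (\<lambda>x. ennreal (X x))"
    unfolding X_def psi_def by (rule refl)
  show ?thesis unfolding Let_def eq using H Q_facts by simp
qed
end
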